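(* Let $\Gamma$ be a vertex-transitive graph on $n$ vertices. Then $\Gamma$ has an induced subgraph $\Gamma'$ with at least $e(\Gamma)/2$ edges satisfying $\chi(\overline{\Gamma'})\le (\ln 4)\,n/\omega(\Gamma)$.
   Context: $\omega(\Gamma)$ is the clique number of $\Gamma$, $\overline{\Gamma'}$ is the complement of $\Gamma'$, and $\chi$ denotes chromatic number. *)

theory Defs
  imports Complex_Main
begin

definition simple_graph :: "'a set \<Rightarrow> 'a set set \<Rightarrow> bool" where
  "simple_graph V E \<longleftrightarrow> finite V \<and>
     (\<forall>e\<in>E. \<exists>u v. e = {u, v} \<and> u \<noteq> v \<and> u \<in> V \<and> v \<in> V)"

definition num_edges :: "'a set set \<Rightarrow> nat" where
  "num_edges E = card E"

definition graph_automorphism :: "'a set \<Rightarrow> 'a set set \<Rightarrow> ('a \<Rightarrow> 'a) \<Rightarrow> bool" where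
  "graph_automorphism V E f \<longleftrightarrow> bij_betw f V V \<and>
     (\<forall>u\<in>V. \<forall>v\<in>V. {u, v} \<in> E \<longleftrightarrow> {f u, f v} \<in> E)"

definition vertex_transitive :: "'a set \<Rightarrow> 'a set set \<Rightarrow> bool" where
  "vertex_transitive V E \<longleftrightarrow>
     (\<forall>u\<in>V. \<forall>v\<in>V. \<exists>f. graph_automorphism V E f \<and> f u = v)"

definition is_clique :: "'a set \<Rightarrow> 'a set set \<Rightarrow> 'a set \<Rightarrow> bool" where
  "is_clique V E C \<longleftrightarrow> C \<subseteq> V \<and> (\<forall>u\<in>C. \<forall>v\<in>C. u \<noteq> v \<longrightarrow> {u, v} \<in> E)"

definition clique_number :: "'a set \<Rightarrow> 'a set set \<Rightarrow> nat" where
  "clique_number V E = Max {card C | C. is_clique V E C}"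

definition induced_edges :: "'a set set \<Rightarrow> 'a set \<Rightarrow> 'a set set" where
  "induced_edges E S = {e \<in> E. e \<subseteq> S}"

definition complement_edges :: "'a set \<Rightarrow> 'a set set \<Rightarrow> 'a set set" where
  "complement_edges V E = {{u, v} | u v. u \<in> V \<and> v \<in> V \<and> u \<noteq> v \<and> {u, v} \<notin> E}"

definition proper_colouring :: "'a set \<Rightarrow> 'a set set \<Rightarrow> nat \<Rightarrow> ('a \<Rightarrow> nat) \<Rightarrow> bool" where
  "proper_colouring V E k c \<longleftrightarrow> c ` V \<subseteq> {..<k} \<and>
     (\<forall>u\<in>V. \<forall>v\<in>V. {u, v} \<in> E \<longrightarrow> c u \<noteq> c v)"

definition chromatic_number :: "'a set \<Rightarrow> 'a set set \<Rightarrow> nat" where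
  "chromatic_number V E = (LEAST k. \<exists>c. proper_colouring V E k c)"

end

theory Submission imports Defs "HOL-Library.FuncSet" "HOL-Analysis.Harmonic_Numbers" begin

lemma sq_step: "0 \<le> (a::real) \<Longrightarrow> a \<le> c \<Longrightarrow> c*c \<le> d \<Longrightarrow> a^2 \<le> d"
  by (smt (verit) mult_mono power2_eq_square)

lemma ln4_ge: "1.38 \<le> ln (4::real)"
proof -
  define y :: real where "y = 1.38/256"
  have y0: "0 \<le> y" "y \<le> 1" by (auto simp: y_def)
  have e: "exp (1.38::real) = exp y ^ 256"
    unfolding y_def by (subst exp_of_nat_mult[symmetric]) simp
  have b: "exp y \<le> 1.0054197"
  proof -
    have "1 + y + y^2 \<le> 1.0054197" by (simp add: y_def power2_eq_square)
    thus ?thesis using exp_bound[OF y0] by linarith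
  qed
  define z where "z = exp y"
  have z0: "0 \<le> z" by (simp add: z_def)
  have "z^2 \<le> 1.0108688" by (rule sq_step[OF z0 b[folded z_def]]) simp
  hence "(z^2)^2 \<le> 1.0218558" by (rule sq_step[OF zero_le_power2]) simp
  hence "((z^2)^2)^2 \<le> 1.0441893" by (rule sq_step[OF zero_le_power2]) simp
  hence "(((z^2)^2)^2)^2 \<le> 1.0903313" by (rule sq_step[OF zero_le_power2]) simp
  hence "((((z^2)^2)^2)^2)^2 \<le> 1.1888224" by (rule sq_step[OF zero_le_power2]) simp
  hence "(((((z^2)^2)^2)^2)^2)^2 \<le> 1.4132987" by (rule sq_step[OF zero_le_power2]) simp
  hence "((((((z^2)^2)^2)^2)^2)^2)^2 \<le> 1.9974133" by (rule sq_step[OF zero_le_power2]) simp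
  hence "(((((((z^2)^2)^2)^2)^2)^2)^2)^2 \<le> 3.9896599" by (rule sq_step[OF zero_le_power2]) simp
  moreover have "(((((((z^2)^2)^2)^2)^2)^2)^2)^2 = z^256"
    by (simp only: power_mult[symmetric]) simp
  ultimately have "exp (1.38::real) \<le> 4" using e z_def by simp
  thus ?thesis by (subst ln_ge_iff) auto
qed

lemma ln4_le: "ln (4::real) \<le> (139/100)"
proof -
  have "ln (4::real) = 2 * ln 2"
    using ln_realpow[of 2 2] by simp
  moreover have "ln (2::real) \<le> 25/36"
    by (rule ln2_le_25_over_36)
  ultimately show ?thesis by simp
qed

lemma small_x:
  fixes p :: real and t :: nat
  assumes p0: "0 < p" and p1: "p \<le> 1/2 \<or> p = 1"
    and tle: "real t \<le> ln 4 / p" and tgt: "ln 4 / p < real t + 1"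
  shows "(1-p)^t \<le> 0.2928"
proof (cases "p = 1")
  case True
  have "1 \<le> ln (4::real)" using ln4_ge by simp
  hence "0 < t" using tgt True by auto
  thus ?thesis using True by (simp add: power_0_left)
next
  case False
  hence p2: "p \<le> 1/2" using p1 by auto
  have L1: "1.38 \<le> ln (4::real)" by (rule ln4_ge)
  have L2: "ln (4::real) \<le> (139/100)" by (rule ln4_le)
  have pt: "ln 4 < p * (real t + 1)" using tgt p0 by (simp add: divide_less_eq mult.commute)
  have pt2: "p * real t \<le> ln 4" using tle p0 by (simp add: le_divide_eq mult.commute)
  have t2: "2 \<le> t"
  proof -
    have "(2.76::real) \<le> 2 * ln (4::real)" using L1 by simp
    also have "\<dots> \<le> ln 4 / p" using p0 p2 L1 by (simp add: le_divide_eq)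
    finally have "(2.76::real) < real t + 1" using tgt by linarith
    hence "(1::real) < real t" by simp
    thus ?thesis by simp
  qed
  show ?thesis
  proof (cases "t \<le> 9")
    case True
    have h: "(1.38::real) < p * (real t + 1)" using pt L1 by linarith
    have plow: "1.38 / (real t + 1) < p" using h by (simp add: divide_less_eq algebra_simps)
    have "(1-p)^t \<le> (1 - 1.38 / (real t + 1))^t"
      by (rule power_mono) (use plow p2 t2 in \<open>auto simp: field_simps\<close>)
    also have "\<dots> \<le> 0.2928"
    proof -
      have "t = 2 \<or> t = 3 \<or> t = 4 \<or> t = 5 \<or> t = 6 \<or> t = 7 \<or> t = 8 \<or> t = 9" using True t2 by auto
      thus ?thesis by (elim disjE) (simp_all add: eval_nat_numeral)
    qed
    finally show ?thesis .
  next
    case False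
    have "(1-p)^t \<le> exp (-p) ^ t"
      by (rule power_mono) (use exp_ge_add_one_self[of "-p"] p2 in auto)
    also have "\<dots> = exp (- (p * real t))"
      by (simp add: exp_of_nat_mult[symmetric] mult.commute)
    also have "\<dots> \<le> exp (p - ln 4)"
      using pt by (simp add: algebra_simps)
    also have "\<dots> = exp p / 4" by (simp add: exp_diff)
    also have "\<dots> \<le> 0.2928"
    proof -
      have "p * 10 \<le> p * real t" using False p0 by simp
      hence pp: "p \<le> (139/1000)" using pt2 L2 by linarith
      have "exp p \<le> 1 + p + p^2" using exp_bound[of p] p0 pp by simp
      also have "\<dots> \<le> 1 + (139/1000) + (139/1000)^2"
        using pp p0 by (smt (verit) power_mono)
      finally show ?thesis by (simp add: power2_eq_square)
    qed
    finally show ?thesis .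
  qed
qed

lemma half_bound:
  fixes x :: real assumes "0 \<le> x" "x \<le> 0.2928"
  shows "1/2 \<le> 1 - 2*x + x^2"
proof -
  have "(0.7072::real)^2 \<le> (1-x)^2" by (rule power_mono) (use assms in auto)
  thus ?thesis by (simp add: power2_eq_square algebra_simps)
qed


lemma card_tuples:
  assumes "finite A"
  shows "card {f \<in> PiE {..<t} (\<lambda>_. A). \<forall>i<t. P (f i)} = card {a \<in> A. P a} ^ t"
proof -
  have "{f \<in> PiE {..<t} (\<lambda>_. A). \<forall>i<t. P (f i)} = PiE {..<t} (\<lambda>_. {a \<in> A. P a})"
    by (auto simp: PiE_iff extensional_def)
  thus ?thesis by (simp add: card_PiE)
qed

lemma tangent:
  fixes y b :: real assumes y: "0 \<le> y" and b: "0 \<le> b"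
  shows "b ^ Suc m + real (Suc m) * b ^ m * (y - b) \<le> y ^ Suc m"
proof (induction m)
  case 0 thus ?case by simp
next
  case (Suc m)
  have "y * (b ^ Suc m + real (Suc m) * b ^ m * (y - b)) \<le> y * y ^ Suc m"
    using Suc y by (rule mult_left_mono)
  moreover have "b ^ Suc (Suc m) + real (Suc (Suc m)) * b ^ Suc m * (y - b)
      = y * (b ^ Suc m + real (Suc m) * b ^ m * (y - b)) - real (Suc m) * b ^ m * (y - b)^2"
    by (simp add: power2_eq_square algebra_simps)
  moreover have "0 \<le> real (Suc m) * b ^ m * (y - b)^2" using b by simp
  ultimately show ?case by simp
qed

lemma jensen_pow:
  fixes y :: "'a \<Rightarrow> real"
  assumes A: "finite A" and y: "\<And>a. a \<in> A \<Longrightarrow> 0 \<le> y a" and b: "0 \<le> b"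
    and s: "real (card A) * b \<le> (\<Sum>a\<in>A. y a)"
  shows "real (card A) * b ^ t \<le> (\<Sum>a\<in>A. y a ^ t)"
proof (cases t)
  case 0 thus ?thesis by simp
next
  case (Suc m)
  have "(\<Sum>a\<in>A. b ^ t + real t * b ^ m * (y a - b)) \<le> (\<Sum>a\<in>A. y a ^ t)"
    using tangent[OF y b] Suc by (intro sum_mono) auto
  moreover have "(\<Sum>a\<in>A. b ^ t + real t * b ^ m * (y a - b))
       = real (card A) * b ^ t + real t * b ^ m * ((\<Sum>a\<in>A. y a) - real (card A) * b)"
  proof -
    have "(\<Sum>a\<in>A. b ^ t + real t * b ^ m * (y a - b))
        = (\<Sum>a\<in>A. b ^ t) + real t * b ^ m * (\<Sum>a\<in>A. (y a - b))"
      by (simp add: sum.distrib sum_distrib_left)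
    thus ?thesis by (simp add: sum_subtractf)
  qed
  moreover have "0 \<le> real t * b ^ m * ((\<Sum>a\<in>A. y a) - real (card A) * b)"
    using s b by simp
  ultimately show ?thesis by linarith
qed

lemma avg_exists:
  fixes g :: "'a \<Rightarrow> real"
  assumes "finite T" "T \<noteq> {}" "real (card T) * c \<le> (\<Sum>x\<in>T. g x)"
  shows "\<exists>x\<in>T. c \<le> g x"
proof (rule ccontr)
  assume "\<not> ?thesis"
  hence "\<And>x. x \<in> T \<Longrightarrow> g x < c" by force
  hence "(\<Sum>x\<in>T. g x) < (\<Sum>x\<in>T. c)" using assms by (intro sum_strict_mono) auto
  thus False using assms by simp
qed


locale vtg =
  fixes V :: "'a set" and E :: "'a set set"
  assumes sg: "simple_graph V E" and vt: "vertex_transitive V E"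
begin

lemma finV: "finite V" using sg by (simp add: simple_graph_def)

lemma edge_form: "\<epsilon> \<in> E \<Longrightarrow> \<exists>u v. \<epsilon> = {u, v} \<and> u \<noteq> v \<and> u \<in> V \<and> v \<in> V"
  using sg by (simp add: simple_graph_def)

lemma E_sub: "E \<subseteq> Pow V" using edge_form by blast

lemma finE: "finite E" using E_sub finV by (meson finite_Pow_iff finite_subset)

lemma card_edge: "\<epsilon> \<in> E \<Longrightarrow> card \<epsilon> = 2" using edge_form by fastforce

lemma noloop: "{u} \<notin> E" using card_edge by fastforce

lemma clique_sub: "is_clique V E C \<Longrightarrow> C \<subseteq> V" by (simp add: is_clique_def)

lemma clique_fin: "is_clique V E C \<Longrightarrow> finite C" using clique_sub finV finite_subset by blast

lemma cards_fin: "finite {card C | C. is_clique V E C}"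
proof -
  have "{card C | C. is_clique V E C} \<subseteq> {..card V}"
    using clique_sub finV by (auto intro: card_mono)
  thus ?thesis using finite_subset by blast
qed

lemma empty_clique: "is_clique V E {}" by (simp add: is_clique_def)

lemma cn_max: "is_clique V E C \<Longrightarrow> card C \<le> clique_number V E"
  unfolding clique_number_def using cards_fin by (auto intro: Max_ge)

lemma cn_ex: "\<exists>C. is_clique V E C \<and> card C = clique_number V E"
proof -
  have "clique_number V E \<in> {card C | C. is_clique V E C}"
    unfolding clique_number_def using cards_fin empty_clique by (intro Max_in) auto
  thus ?thesis by auto
qed

lemma cn_le_n: "clique_number V E \<le> card V"
  using cn_ex clique_sub finV card_mono by metis

definition KK where "KK = {C. is_clique V E C \<and> card C = clique_number V E}"

lemma KK_sub: "KK \<subseteq> Pow V" unfolding KK_def using clique_sub by blast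
lemma KK_fin: "finite KK" using KK_sub finV by (meson finite_Pow_iff finite_subset)
lemma KK_ne: "KK \<noteq> {}" unfolding KK_def using cn_ex by blast
lemma KK_clique: "C \<in> KK \<Longrightarrow> is_clique V E C" by (simp add: KK_def)
lemma KK_card: "C \<in> KK \<Longrightarrow> card C = clique_number V E" by (simp add: KK_def)
lemma KK_subV: "C \<in> KK \<Longrightarrow> C \<subseteq> V" using KK_sub by blast

definition rc where "rc u = card {C \<in> KK. u \<in> C}"

lemma aut_clique:
  assumes f: "graph_automorphism V E f" and C: "is_clique V E C"
  shows "is_clique V E (f ` C)" "card (f ` C) = card C"
proof -
  have bij: "bij_betw f V V" and adj: "\<forall>u\<in>V. \<forall>v\<in>V. {u, v} \<in> E \<longleftrightarrow> {f u, f v} \<in> E"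
    using f by (auto simp: graph_automorphism_def)
  have CV: "C \<subseteq> V" using clique_sub C .
  have inj: "inj_on f V" using bij bij_betw_imp_inj_on by blast
  show "card (f ` C) = card C" using inj CV by (meson card_image inj_on_subset)
  show "is_clique V E (f ` C)"
    unfolding is_clique_def
  proof (intro conjI ballI impI)
    show "f ` C \<subseteq> V" using CV bij bij_betw_imp_surj_on by blast
  next
    fix a b assume "a \<in> f ` C" "b \<in> f ` C" "a \<noteq> b"
    then obtain x y where xy: "x \<in> C" "y \<in> C" "a = f x" "b = f y" by blast
    hence "x \<noteq> y" using \<open>a \<noteq> b\<close> by blast
    hence "{x, y} \<in> E" using C xy by (simp add: is_clique_def)
    thus "{a, b} \<in> E" using adj xy CV by blast
  qed
qed

lemma rc_le: assumes u: "u \<in> V" and v: "v \<in> V" shows "rc u \<le> rc v"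
proof -
  obtain f where f: "graph_automorphism V E f" "f u = v"
    using vt u v by (auto simp: vertex_transitive_def)
  have inj: "inj_on f V" using f by (auto simp: graph_automorphism_def bij_betw_def)
  have "inj_on (image f) {C \<in> KK. u \<in> C}"
  proof (rule inj_onI)
    fix C D assume "C \<in> {C \<in> KK. u \<in> C}" "D \<in> {C \<in> KK. u \<in> C}" "f ` C = f ` D"
    thus "C = D" using inj KK_subV by (simp add: inj_on_image_eq_iff)
  qed
  moreover have "image f ` {C \<in> KK. u \<in> C} \<subseteq> {C \<in> KK. v \<in> C}"
    using aut_clique[OF f(1)] f(2) by (auto simp: KK_def)
  moreover have "finite {C \<in> KK. v \<in> C}" using KK_fin by simp
  ultimately show ?thesis unfolding rc_def by (rule card_inj_on_le)
qed

lemma rc_eq: "u \<in> V \<Longrightarrow> v \<in> V \<Longrightarrow> rc u = rc v"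
  using rc_le le_antisym by blast

lemma double_count: "(\<Sum>C\<in>KK. card C) = (\<Sum>v\<in>V. rc v)"
proof -
  have "(\<Sum>C\<in>KK. card C) = (\<Sum>C\<in>KK. \<Sum>v\<in>V. of_bool (v \<in> C))"
  proof (intro sum.cong refl)
    fix C assume "C \<in> KK"
    hence "V \<inter> {v. v \<in> C} = C" using KK_subV by blast
    thus "card C = (\<Sum>v\<in>V. of_bool (v \<in> C))" using finV by simp
  qed
  also have "\<dots> = (\<Sum>v\<in>V. \<Sum>C\<in>KK. of_bool (v \<in> C))" by (rule sum.swap)
  also have "\<dots> = (\<Sum>v\<in>V. rc v)"
    using KK_fin by (intro sum.cong) (auto simp: rc_def Int_def)
  finally show ?thesis .
qed


lemma sum_rc: assumes "X \<subseteq> V" "v \<in> V"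
  shows "(\<Sum>C\<in>KK. card (X \<inter> C)) = card X * rc v"
proof -
  have fX: "finite X" using assms finV finite_subset by blast
  have "(\<Sum>C\<in>KK. card (X \<inter> C)) = (\<Sum>C\<in>KK. \<Sum>x\<in>X. of_bool (x \<in> C))"
  proof (intro sum.cong refl)
    fix C assume "C \<in> KK"
    have "X \<inter> {x. x \<in> C} = X \<inter> C" by blast
    thus "card (X \<inter> C) = (\<Sum>x\<in>X. of_bool (x \<in> C))" using fX by simp
  qed
  also have "\<dots> = (\<Sum>x\<in>X. \<Sum>C\<in>KK. of_bool (x \<in> C))" by (rule sum.swap)
  also have "\<dots> = (\<Sum>x\<in>X. rc v)"
  proof (intro sum.cong refl)
    fix x assume "x \<in> X"
    hence "rc x = rc v" using rc_eq assms by blast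
    thus "(\<Sum>C\<in>KK. of_bool (x \<in> C)) = rc v" using KK_fin by (simp add: rc_def Int_def)
  qed
  finally show ?thesis by simp
qed

lemma Kom: assumes "v \<in> V" shows "card KK * clique_number V E = card V * rc v"
proof -
  have "card KK * clique_number V E = (\<Sum>C\<in>KK. card C)" using KK_card by simp
  also have "\<dots> = (\<Sum>v\<in>V. rc v)" by (rule double_count)
  also have "\<dots> = (\<Sum>u\<in>V. rc v)"
  proof (intro sum.cong refl)
    fix u assume "u \<in> V" thus "rc u = rc v" using rc_eq assms by blast
  qed
  finally show ?thesis by simp
qed

lemma deg_eq: assumes "u \<in> V" shows "card {e \<in> E. u \<in> e} = card {v \<in> V. {u, v} \<in> E}"
proof -
  have "bij_betw (\<lambda>v. {u, v}) {v \<in> V. {u, v} \<in> E} {e \<in> E. u \<in> e}"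
  proof (rule bij_betwI')
    fix x y assume "x \<in> {v \<in> V. {u, v} \<in> E}" "y \<in> {v \<in> V. {u, v} \<in> E}"
    hence "x \<noteq> u" "y \<noteq> u" using noloop by force+
    thus "({u, x} = {u, y}) = (x = y)" by (auto simp: doubleton_eq_iff)
  next
    fix x assume "x \<in> {v \<in> V. {u, v} \<in> E}"
    thus "{u, x} \<in> {e \<in> E. u \<in> e}" by simp
  next
    fix e assume e: "e \<in> {e \<in> E. u \<in> e}"
    then obtain a b where ab: "e = {a, b}" "a \<noteq> b" "a \<in> V" "b \<in> V" using edge_form by blast
    show "\<exists>x\<in>{v \<in> V. {u, v} \<in> E}. e = {u, x}"
    proof (cases "u = a")
      case True thus ?thesis using ab e by auto
    next
      case False hence "u = b" using ab e by auto
      thus ?thesis using ab e by (auto simp: insert_commute)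
    qed
  qed
  thus ?thesis by (simp add: bij_betw_same_card)
qed

lemma nbr_bound: assumes C: "C \<in> KK" and v: "v \<in> V"
  shows "card {u \<in> C. {u, v} \<in> E} \<le> clique_number V E - 1"
proof (cases "v \<in> C")
  case True
  have "{u \<in> C. {u, v} \<in> E} \<subseteq> C - {v}" using noloop by auto
  hence "card {u \<in> C. {u, v} \<in> E} \<le> card (C - {v})"
    using clique_fin[OF KK_clique[OF C]] by (intro card_mono) auto
  thus ?thesis using True KK_card[OF C] by simp
next
  case False
  have fC: "finite C" using clique_fin[OF KK_clique[OF C]] .
  have le: "card {u \<in> C. {u, v} \<in> E} \<le> card C" using fC by (intro card_mono) auto
  have "card {u \<in> C. {u, v} \<in> E} \<noteq> card C"
  proof
    assume eq: "card {u \<in> C. {u, v} \<in> E} = card C"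
    have "{u \<in> C. {u, v} \<in> E} = C" using card_subset_eq[OF fC _ eq] by auto
    hence adj: "\<forall>u\<in>C. {u, v} \<in> E" by blast
    have "is_clique V E (insert v C)"
      using KK_clique[OF C] adj v unfolding is_clique_def by (auto simp: insert_commute)
    hence "card (insert v C) \<le> clique_number V E" by (rule cn_max)
    thus False using False fC KK_card[OF C] by simp
  qed
  thus ?thesis using le KK_card[OF C] by simp
qed

lemma turan_clique: assumes C: "C \<in> KK"
  shows "(\<Sum>e\<in>E. card (e \<inter> C)) \<le> card V * (clique_number V E - 1)"
proof -
  have fC: "finite C" using clique_fin[OF KK_clique[OF C]] .
  have CV: "C \<subseteq> V" using KK_subV[OF C] .
  have "(\<Sum>e\<in>E. card (e \<inter> C)) = (\<Sum>e\<in>E. \<Sum>u\<in>C. of_bool (u \<in> e))"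
  proof (intro sum.cong refl)
    fix e assume "e \<in> E"
    have "C \<inter> {u. u \<in> e} = e \<inter> C" by blast
    thus "card (e \<inter> C) = (\<Sum>u\<in>C. of_bool (u \<in> e))" using fC by simp
  qed
  also have "\<dots> = (\<Sum>u\<in>C. \<Sum>e\<in>E. of_bool (u \<in> e))" by (rule sum.swap)
  also have "\<dots> = (\<Sum>u\<in>C. \<Sum>v\<in>V. of_bool ({u, v} \<in> E))"
  proof (intro sum.cong refl)
    fix u assume "u \<in> C"
    hence d: "card {e \<in> E. u \<in> e} = card {v \<in> V. {u, v} \<in> E}" using deg_eq CV by blast
    have a: "(\<Sum>e\<in>E. of_bool (u \<in> e)) = card {e \<in> E. u \<in> e}"
      using finE by (simp add: Int_def)
    have b: "(\<Sum>v\<in>V. of_bool ({u, v} \<in> E)) = card {v \<in> V. {u, v} \<in> E}"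
      using finV by (simp add: Int_def)
    show "(\<Sum>e\<in>E. of_bool (u \<in> e)) = (\<Sum>v\<in>V. of_bool ({u, v} \<in> E)::nat)"
      using a b d by simp
  qed
  also have "\<dots> = (\<Sum>v\<in>V. \<Sum>u\<in>C. of_bool ({u, v} \<in> E))" by (rule sum.swap)
  also have "\<dots> = (\<Sum>v\<in>V. card {u \<in> C. {u, v} \<in> E})"
  proof (intro sum.cong refl)
    fix v assume "v \<in> V"
    have "C \<inter> {u. {u, v} \<in> E} = {u \<in> C. {u, v} \<in> E}" by auto
    thus "(\<Sum>u\<in>C. of_bool ({u, v} \<in> E)) = card {u \<in> C. {u, v} \<in> E}" using fC by simp
  qed
  also have "\<dots> \<le> (\<Sum>v\<in>V. clique_number V E - 1)"
    using nbr_bound[OF C] by (intro sum_mono) auto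
  finally show ?thesis by simp
qed

lemma clique_edges: assumes C: "C \<in> KK"
  shows "card {e \<in> E. e \<subseteq> C} = clique_number V E choose 2"
proof -
  have "{e \<in> E. e \<subseteq> C} = {B. B \<subseteq> C \<and> card B = 2}"
  proof
    show "{e \<in> E. e \<subseteq> C} \<subseteq> {B. B \<subseteq> C \<and> card B = 2}" using card_edge by auto
    show "{B. B \<subseteq> C \<and> card B = 2} \<subseteq> {e \<in> E. e \<subseteq> C}"
    proof
      fix B assume "B \<in> {B. B \<subseteq> C \<and> card B = 2}"
      then obtain x y where "B = {x, y}" "x \<noteq> y" "B \<subseteq> C" by (auto simp: card_2_iff)
      thus "B \<in> {e \<in> E. e \<subseteq> C}" using KK_clique[OF C] by (auto simp: is_clique_def)
    qed
  qed
  thus ?thesis using n_subsets[OF clique_fin[OF KK_clique[OF C]], of 2] KK_card[OF C] by simp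
qed


lemma om_pos: assumes "v \<in> V" shows "1 \<le> clique_number V E"
proof -
  have "is_clique V E {v}" using assms by (simp add: is_clique_def)
  from cn_max[OF this] show ?thesis by simp
qed

lemma nonadj_bound: assumes u: "u \<in> V" and v: "v \<in> V" and uv: "u \<noteq> v" "{u, v} \<notin> E" and w: "w \<in> V"
  shows "2 * rc w \<le> card KK"
proof -
  have "(\<Sum>C\<in>KK. card ({u, v} \<inter> C)) = card {u, v} * rc w"
    using u v w by (intro sum_rc) auto
  hence "(\<Sum>C\<in>KK. card ({u, v} \<inter> C)) = 2 * rc w" using uv by simp
  moreover have "(\<Sum>C\<in>KK. card ({u, v} \<inter> C)) \<le> (\<Sum>C\<in>KK. 1)"
  proof (intro sum_mono)
    fix C assume C: "C \<in> KK"
    have "\<not> (u \<in> C \<and> v \<in> C)" using KK_clique[OF C] uv by (auto simp: is_clique_def)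
    hence "{u, v} \<inter> C \<subseteq> {u} \<or> {u, v} \<inter> C \<subseteq> {v}" by blast
    thus "card ({u, v} \<inter> C) \<le> 1"
    proof (elim disjE)
      assume h: "{u, v} \<inter> C \<subseteq> {u}" show ?thesis using card_mono[OF _ h] by simp
    next
      assume h: "{u, v} \<inter> C \<subseteq> {v}" show ?thesis using card_mono[OF _ h] by simp
    qed
  qed
  ultimately show ?thesis by simp
qed

lemma p_cases: assumes "V \<noteq> {}"
  shows "2 * clique_number V E \<le> card V \<or> clique_number V E = card V"
proof (cases "\<exists>u\<in>V. \<exists>v\<in>V. u \<noteq> v \<and> {u, v} \<notin> E")
  case True
  then obtain u v where uv: "u \<in> V" "v \<in> V" "u \<noteq> v" "{u, v} \<notin> E" by blast
  have h: "2 * rc u \<le> card KK" using nonadj_bound[OF uv uv(1)] .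
  have k: "card KK * clique_number V E = card V * rc u" using Kom uv(1) .
  have Kp: "0 < card KK" using KK_fin KK_ne by (simp add: card_gt_0_iff)
  have "card KK * (2 * clique_number V E) = 2 * (card V * rc u)" using k by simp
  also have "\<dots> = card V * (2 * rc u)" by simp
  also have "\<dots> \<le> card V * card KK" using h by simp
  finally have "card KK * (2 * clique_number V E) \<le> card KK * card V" by (simp add: mult.commute)
  thus ?thesis using Kp by simp
next
  case False
  hence "is_clique V E V" by (auto simp: is_clique_def)
  hence "card V \<le> clique_number V E" by (rule cn_max)
  thus ?thesis using cn_le_n by simp
qed

lemma turan: assumes v0: "v0 \<in> V"
  shows "2 * real (card E) * real (clique_number V E)
         \<le> real (card V) ^ 2 * (real (clique_number V E) - 1)"
proof -
  define r where "r = rc v0"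
  define om where "om = clique_number V E"
  define K where "K = card KK"
  define n where "n = card V"
  have om1: "1 \<le> om" using om_pos[OF v0] by (simp add: om_def)
  have Kp: "0 < K" using KK_fin KK_ne by (simp add: card_gt_0_iff K_def)
  have k: "K * om = n * r" using Kom[OF v0] by (simp add: K_def om_def n_def r_def)
  have "0 < K * om" using Kp om1 by simp
  hence "0 < n * r" using k by simp
  hence rp: "0 < r" by simp
  have kr: "real K * real om = real n * real r" using arg_cong[OF k, of real] by simp
  have "(\<Sum>C\<in>KK. \<Sum>e\<in>E. card (e \<inter> C)) \<le> (\<Sum>C\<in>KK. n * (om - 1))"
    using turan_clique by (intro sum_mono) (simp add: n_def om_def)
  moreover have "(\<Sum>C\<in>KK. \<Sum>e\<in>E. card (e \<inter> C)) = (\<Sum>e\<in>E. \<Sum>C\<in>KK. card (e \<inter> C))"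
    by (rule sum.swap)
  moreover have "(\<Sum>e\<in>E. \<Sum>C\<in>KK. card (e \<inter> C)) = (\<Sum>e\<in>E. 2 * r)"
  proof (intro sum.cong refl)
    fix e assume e: "e \<in> E"
    have "(\<Sum>C\<in>KK. card (e \<inter> C)) = card e * rc v0" using E_sub e v0 by (intro sum_rc) auto
    thus "(\<Sum>C\<in>KK. card (e \<inter> C)) = 2 * r" using card_edge[OF e] by (simp add: r_def)
  qed
  ultimately have A0: "card E * (2 * r) \<le> K * (n * (om - 1))" by (simp add: K_def)
  have A1: "real (card E * (2 * r)) \<le> real (K * (n * (om - 1)))" using A0 by (rule of_nat_mono)
  have A: "real (card E) * 2 * real r \<le> real K * real n * (real om - 1)"
    using A1 om1 by (simp add: of_nat_diff mult.assoc)
  have "real (card E) * 2 * real r * real om \<le> real K * real n * (real om - 1) * real om"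
    using A by (intro mult_right_mono) auto
  also have "\<dots> = (real K * real om) * real n * (real om - 1)" by (simp add: algebra_simps)
  also have "\<dots> = real r * (real n ^ 2 * (real om - 1))"
    unfolding kr by (simp add: power2_eq_square algebra_simps)
  finally have "real r * (2 * real (card E) * real om) \<le> real r * (real n ^ 2 * (real om - 1))"
    by (simp add: algebra_simps)
  thus ?thesis using rp by (simp add: n_def om_def)
qed

definition yv where "yv e = card {C \<in> KK. C \<inter> e = {}}"

lemma pointwise: assumes e: "e \<in> E"
  shows "real (of_bool (C \<inter> e = {})) = 1 - real (card (e \<inter> C)) + real (of_bool (e \<subseteq> C))"
proof -
  obtain a b where ab: "e = {a, b}" "a \<noteq> b" using edge_form[OF e] by blast
  show ?thesis using ab by (cases "a \<in> C"; cases "b \<in> C") (auto simp: Int_insert_left)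
qed

lemma sum_yv: assumes v0: "v0 \<in> V"
  shows "(\<Sum>e\<in>E. real (yv e)) = real (card E) * real (card KK) - 2 * real (card E) * real (rc v0)
          + real (card KK) * (real (clique_number V E) * (real (clique_number V E) - 1) / 2)"
proof -
  have "(\<Sum>e\<in>E. real (yv e)) = (\<Sum>e\<in>E. \<Sum>C\<in>KK. real (of_bool (C \<inter> e = {})))"
  proof (intro sum.cong refl)
    fix e assume "e \<in> E"
    have "KK \<inter> {C. C \<inter> e = {}} = {C \<in> KK. C \<inter> e = {}}" by auto
    thus "real (yv e) = (\<Sum>C\<in>KK. real (of_bool (C \<inter> e = {})))"
      using KK_fin by (simp add: yv_def)
  qed
  also have "\<dots> = (\<Sum>e\<in>E. \<Sum>C\<in>KK. (1 - real (card (e \<inter> C)) + real (of_bool (e \<subseteq> C))))"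
    using pointwise by (intro sum.cong refl) auto
  also have "\<dots> = (\<Sum>e\<in>E. (real (card KK) - real (\<Sum>C\<in>KK. card (e \<inter> C))))
                  + (\<Sum>e\<in>E. \<Sum>C\<in>KK. real (of_bool (e \<subseteq> C)))"
    by (simp add: sum.distrib sum_subtractf)
  also have "(\<Sum>e\<in>E. (real (card KK) - real (\<Sum>C\<in>KK. card (e \<inter> C))))
             = (\<Sum>e\<in>E. (real (card KK) - 2 * real (rc v0)))"
  proof (intro sum.cong refl)
    fix e assume e: "e \<in> E"
    have "(\<Sum>C\<in>KK. card (e \<inter> C)) = card e * rc v0" using E_sub e v0 by (intro sum_rc) auto
    thus "real (card KK) - real (\<Sum>C\<in>KK. card (e \<inter> C)) = real (card KK) - 2 * real (rc v0)"
      using card_edge[OF e] by simp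
  qed
  also have "(\<Sum>e\<in>E. \<Sum>C\<in>KK. real (of_bool (e \<subseteq> C))) = (\<Sum>C\<in>KK. \<Sum>e\<in>E. real (of_bool (e \<subseteq> C)))"
    by (rule sum.swap)
  also have "\<dots> = (\<Sum>C\<in>KK. real (clique_number V E) * (real (clique_number V E) - 1) / 2)"
  proof (intro sum.cong refl)
    fix C assume C: "C \<in> KK"
    have "E \<inter> {e. e \<subseteq> C} = {e \<in> E. e \<subseteq> C}" by auto
    hence "(\<Sum>e\<in>E. real (of_bool (e \<subseteq> C))) = real (clique_number V E choose 2)"
      using finE clique_edges[OF C] by simp
    also have "\<dots> = real (clique_number V E) * (real (clique_number V E) - 1) / 2"
      by (simp add: binomial_gbinomial gbinomial_pochhammer' pochhammer_Suc_prod numeral_2_eq_2 algebra_simps)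
    finally show "(\<Sum>e\<in>E. real (of_bool (e \<subseteq> C))) = real (clique_number V E) * (real (clique_number V E) - 1) / 2" .
  qed
  finally show ?thesis by (simp add: algebra_simps)
qed

lemma main:
  shows "\<exists>S \<subseteq> V.
           real (num_edges (induced_edges E S)) \<ge> real (num_edges E) / 2 \<and>
           real (chromatic_number S (complement_edges S (induced_edges E S)))
             \<le> ln 4 * real (card V) / real (clique_number V E)"
proof (cases "E = {}")
  case True
  have pc: "proper_colouring {} X 0 (\<lambda>_. 0)" for X :: "'a set set"
    by (simp add: proper_colouring_def)
  have "chromatic_number {} (complement_edges {} (induced_edges E {})) = 0"
    unfolding chromatic_number_def by (rule Least_eq_0) (use pc in blast)
  moreover have "0 \<le> ln 4 * real (card V) / real (clique_number V E)" by simp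
  ultimately show ?thesis using True
    by (intro exI[of _ "{}"]) (auto simp: num_edges_def induced_edges_def)
next
  case False
  then obtain \<epsilon> where "\<epsilon> \<in> E" by blast
  then obtain v0 w0 where "v0 \<in> V" using edge_form by blast
  hence v0: "v0 \<in> V" by simp
  define n where "n = card V"
  define om where "om = clique_number V E"
  define K where "K = card KK"
  define r where "r = rc v0"
  define e where "e = card E"
  define p :: real where "p = real om / real n"
  define t where "t = nat \<lfloor>ln 4 * real n / real om\<rfloor>"
  define T where "T = PiE {..<t} (\<lambda>_. KK)"
  define Sf where "Sf f = (\<Union>i\<in>{..<t}. f i)" for f :: "nat \<Rightarrow> 'a set"
  have n0: "0 < n" using v0 finV by (auto simp: n_def card_gt_0_iff)
  have om1: "1 \<le> om" using om_pos[OF v0] by (simp add: om_def)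
  have Kp: "0 < K" using KK_fin KK_ne by (simp add: card_gt_0_iff K_def)
  have kr: "real K * real om = real n * real r"
    using arg_cong[OF Kom[OF v0], of real] by (simp add: K_def om_def n_def r_def)
  have p0: "0 < p" using n0 om1 by (simp add: p_def)
  have rK: "real r = real K * p" using kr n0 by (simp add: p_def field_simps)
  have pc: "p \<le> 1/2 \<or> p = 1"
  proof -
    have "2 * om \<le> n \<or> om = n" using p_cases v0 by (auto simp: om_def n_def)
    thus ?thesis
    proof
      assume "2 * om \<le> n"
      hence "2 * real om \<le> real n" by linarith
      thus ?thesis using n0 by (simp add: p_def field_simps)
    next
      assume "om = n" thus ?thesis using n0 by (simp add: p_def)
    qed
  qed
  have p1: "p \<le> 1" using pc by auto
  have xnn: "0 \<le> ln 4 * real n / real om" by simp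
  have t_le: "real t \<le> ln 4 * real n / real om"
    using xnn by (simp add: t_def)
  have t_gt: "ln 4 * real n / real om < real t + 1"
    using xnn by (simp add: t_def)
  have lp: "ln 4 / p = ln 4 * real n / real om" by (simp add: p_def)
  define x where "x = (1 - p) ^ t"
  have xs: "x \<le> 0.2928" unfolding x_def using small_x[OF p0 pc] t_le t_gt lp by simp
  have x0: "0 \<le> x" using p1 by (simp add: x_def)
  have half: "1/2 \<le> 1 - 2*x + x^2" using half_bound[OF x0 xs] .

  have finT: "finite T" using KK_fin by (simp add: T_def finite_PiE)
  have cardT: "card T = K ^ t" by (simp add: T_def card_PiE K_def)
  have TV: "Sf f \<subseteq> V" if "f \<in> T" for f using KK_subV that by (auto simp: T_def Sf_def PiE_iff)

  have vert: "(\<Sum>f\<in>T. real (of_bool (u \<notin> Sf f))) = (real K - real r) ^ t" if u: "u \<in> V" for u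
  proof -
    have c1: "card {C \<in> KK. u \<notin> C} + card {C \<in> KK. u \<in> C} = K"
      using KK_fin by (subst card_Un_disjoint[symmetric]) (auto simp: K_def intro: arg_cong[where f=card])
    have c2: "card {C \<in> KK. u \<in> C} = r" using rc_eq[OF u v0] by (simp add: rc_def r_def)
    have c3: "real (card {C \<in> KK. u \<notin> C}) = real K - real r" using c1 c2 by linarith
    have "(\<Sum>f\<in>T. real (of_bool (u \<notin> Sf f))) = real (card {f \<in> T. \<forall>i<t. u \<notin> f i})"
      using finT by (simp add: Int_def Sf_def) (simp add: Ball_def)
    also have "card {f \<in> T. \<forall>i<t. u \<notin> f i} = card {C \<in> KK. u \<notin> C} ^ t"
      unfolding T_def by (rule card_tuples[OF KK_fin])
    finally show ?thesis using c3 by simp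
  qed
  have both: "(\<Sum>f\<in>T. real (of_bool (\<epsilon> \<inter> Sf f = {}))) = real (yv \<epsilon>) ^ t" for \<epsilon>
  proof -
    have "(\<Sum>f\<in>T. real (of_bool (\<epsilon> \<inter> Sf f = {}))) = real (card {f \<in> T. \<forall>i<t. f i \<inter> \<epsilon> = {}})"
      using finT by (simp add: Int_def Sf_def) (smt (verit, best) Collect_cong disjoint_iff lessThan_iff)
    also have "card {f \<in> T. \<forall>i<t. f i \<inter> \<epsilon> = {}} = card {C \<in> KK. C \<inter> \<epsilon> = {}} ^ t"
      unfolding T_def by (rule card_tuples[OF KK_fin])
    finally show ?thesis by (simp add: yv_def)
  qed
  have edge_count: "(\<Sum>f\<in>T. real (of_bool (\<epsilon> \<subseteq> Sf f)))
      = real K ^ t - 2 * (real K - real r) ^ t + real (yv \<epsilon>) ^ t" if \<epsilon>: "\<epsilon> \<in> E" for \<epsilon>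
  proof -
    obtain u v where uv: "\<epsilon> = {u, v}" "u \<noteq> v" "u \<in> V" "v \<in> V" using edge_form[OF \<epsilon>] by blast
    have pw: "real (of_bool (\<epsilon> \<subseteq> Sf f)) = 1 - real (of_bool (u \<notin> Sf f)) - real (of_bool (v \<notin> Sf f))
                + real (of_bool (\<epsilon> \<inter> Sf f = {}))" for f
      using uv by (cases "u \<in> Sf f"; cases "v \<in> Sf f") auto
    have "(\<Sum>f\<in>T. real (of_bool (\<epsilon> \<subseteq> Sf f)))
        = (\<Sum>f\<in>T. 1) - (\<Sum>f\<in>T. real (of_bool (u \<notin> Sf f))) - (\<Sum>f\<in>T. real (of_bool (v \<notin> Sf f)))
          + (\<Sum>f\<in>T. real (of_bool (\<epsilon> \<inter> Sf f = {})))"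
      unfolding pw by (simp add: sum.distrib sum_subtractf)
    also have "\<dots> = real K ^ t - 2 * (real K - real r) ^ t + real (yv \<epsilon>) ^ t"
      using vert[OF uv(3)] vert[OF uv(4)] both cardT by simp
    finally show ?thesis .
  qed
  have kept_sum: "(\<Sum>f\<in>T. real (card (induced_edges E (Sf f))))
      = real e * real K ^ t - 2 * real e * (real K - real r) ^ t + (\<Sum>\<epsilon>\<in>E. real (yv \<epsilon>) ^ t)"
  proof -
    have "(\<Sum>f\<in>T. real (card (induced_edges E (Sf f)))) = (\<Sum>f\<in>T. \<Sum>\<epsilon>\<in>E. real (of_bool (\<epsilon> \<subseteq> Sf f)))"
    proof (intro sum.cong refl)
      fix f assume "f \<in> T"
      have "E \<inter> {\<epsilon>. \<epsilon> \<subseteq> Sf f} = induced_edges E (Sf f)" by (auto simp: induced_edges_def)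
      thus "real (card (induced_edges E (Sf f))) = (\<Sum>\<epsilon>\<in>E. real (of_bool (\<epsilon> \<subseteq> Sf f)))"
        using finE by simp
    qed
    also have "\<dots> = (\<Sum>\<epsilon>\<in>E. \<Sum>f\<in>T. real (of_bool (\<epsilon> \<subseteq> Sf f)))" by (rule sum.swap)
    also have "\<dots> = (\<Sum>\<epsilon>\<in>E. real K ^ t - 2 * (real K - real r) ^ t + real (yv \<epsilon>) ^ t)"
      using edge_count by (intro sum.cong) auto
    also have "\<dots> = real e * real K ^ t - 2 * real e * (real K - real r) ^ t + (\<Sum>\<epsilon>\<in>E. real (yv \<epsilon>) ^ t)"
      by (simp add: sum.distrib sum_subtractf e_def right_diff_distrib)
    finally show ?thesis .
  qed
  have T1: "real e * p^2 \<le> real om * (real om - 1) / 2"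
  proof -
    have A: "2 * real e * real om \<le> real n ^ 2 * (real om - 1)"
      using turan[OF v0] by (simp add: e_def om_def n_def)
    have B: "2 * real e * real om * real om \<le> real n ^ 2 * (real om - 1) * real om"
      using A by (intro mult_right_mono) auto
    have "real e * p^2 = (2 * real e * real om * real om) / (2 * real n ^ 2)"
      by (simp add: p_def power2_eq_square)
    also have "\<dots> \<le> (real n ^ 2 * (real om - 1) * real om) / (2 * real n ^ 2)"
      using B n0 by (intro divide_right_mono) auto
    also have "\<dots> = real om * (real om - 1) / 2" using n0 by (simp add: field_simps power2_eq_square)
    finally show ?thesis .
  qed
  have ysum: "real (card E) * (real K * (1-p)^2) \<le> (\<Sum>\<epsilon>\<in>E. real (yv \<epsilon>))"
  proof -
    have "real K * (real e * p^2) \<le> real K * (real om * (real om - 1) / 2)"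
      using T1 by (intro mult_left_mono) auto
    thus ?thesis using sum_yv[OF v0] rK
      by (simp add: e_def om_def K_def r_def power2_eq_square algebra_simps)
  qed
  have jen: "real (card E) * (real K * (1-p)^2) ^ t \<le> (\<Sum>\<epsilon>\<in>E. real (yv \<epsilon>) ^ t)"
    using p1 by (intro jensen_pow[OF finE _ _ ysum]) auto
  have Kr: "real K - real r = real K * (1 - p)" using rK by (simp add: algebra_simps)
  have "real (card T) * (real e / 2) = real e * real K ^ t * (1/2)" using cardT by simp
  also have "\<dots> \<le> real e * real K ^ t * (1 - 2*x + x^2)"
    using half by (intro mult_left_mono) auto
  also have "\<dots> = real e * real K ^ t - 2 * real e * (real K * (1-p)) ^ t + real e * (real K * (1-p)^2) ^ t"
  proof -
    have q1: "(real K * (1-p)) ^ t = real K ^ t * x" by (simp add: x_def power_mult_distrib)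
    have q0: "((1-p)^2)^t = x^2" unfolding x_def by (simp add: power_mult[symmetric] mult.commute)
    have q2: "(real K * (1-p)^2) ^ t = real K ^ t * x^2" using q0 by (simp add: power_mult_distrib)
    show ?thesis unfolding q1 q2 by (simp add: algebra_simps)
  qed
  also have "\<dots> \<le> (\<Sum>f\<in>T. real (card (induced_edges E (Sf f))))"
    unfolding kept_sum Kr using jen by (simp add: e_def)
  finally have avg: "real (card T) * (real e / 2) \<le> (\<Sum>f\<in>T. real (card (induced_edges E (Sf f))))" .
  have Tne: "T \<noteq> {}" using cardT Kp by auto
  obtain f where f: "f \<in> T" "real e / 2 \<le> real (card (induced_edges E (Sf f)))"
    using avg_exists[OF finT Tne avg] by blast
  define c where "c v = (LEAST i. i < t \<and> v \<in> f i)" for v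
  have cprop: "c v < t \<and> v \<in> f (c v)" if vS: "v \<in> Sf f" for v
  proof -
    obtain i where "i < t" "v \<in> f i" using vS by (auto simp: Sf_def)
    thus ?thesis unfolding c_def using LeastI[of "\<lambda>i. i < t \<and> v \<in> f i" i] by blast
  qed
  have fK: "f i \<in> KK" if "i < t" for i using f(1) that by (auto simp: T_def PiE_iff)
  have proper: "proper_colouring (Sf f) (complement_edges (Sf f) (induced_edges E (Sf f))) t c"
    unfolding proper_colouring_def
  proof (intro conjI ballI impI)
    show "c ` Sf f \<subseteq> {..<t}" using cprop by auto
  next
    fix u v assume u: "u \<in> Sf f" and v: "v \<in> Sf f"
      and uv: "{u, v} \<in> complement_edges (Sf f) (induced_edges E (Sf f))"
    then obtain a b where ab: "{u, v} = {a, b}" "a \<noteq> b" "{a, b} \<notin> induced_edges E (Sf f)"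
      by (auto simp: complement_edges_def)
    have "u \<noteq> v" using ab by (metis doubleton_eq_iff)
    have "{u, v} \<notin> E" using ab u v by (auto simp: induced_edges_def)
    show "c u \<noteq> c v"
    proof
      assume eq: "c u = c v"
      have "u \<in> f (c u)" "v \<in> f (c u)" "c u < t" using cprop[OF u] cprop[OF v] eq by auto
      hence "{u, v} \<in> E" using KK_clique[OF fK[OF \<open>c u < t\<close>]] \<open>u \<noteq> v\<close> by (auto simp: is_clique_def)
      thus False using \<open>{u, v} \<notin> E\<close> by blast
    qed
  qed
  have chi: "chromatic_number (Sf f) (complement_edges (Sf f) (induced_edges E (Sf f))) \<le> t"
    unfolding chromatic_number_def by (rule Least_le) (use proper in blast)
  have "real (chromatic_number (Sf f) (complement_edges (Sf f) (induced_edges E (Sf f))))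
        \<le> ln 4 * real (card V) / real (clique_number V E)"
    using chi t_le by (simp add: n_def om_def)
  thus ?thesis using TV[OF f(1)] f(2)
    by (intro exI[of _ "Sf f"]) (simp add: num_edges_def e_def)
qed

end

theorem lemma2p2:
  fixes V :: "'a set" and E :: "'a set set" and n :: nat
  assumes "simple_graph V E"
    and "vertex_transitive V E"
    and "card V = n"
  shows "\<exists>S \<subseteq> V.
           real (num_edges (induced_edges E S)) \<ge> real (num_edges E) / 2 \<and>
           real (chromatic_number S (complement_edges S (induced_edges E S)))
             \<le> ln 4 * real n / real (clique_number V E)"
proof -
  interpret vtg V E using assms(1,2) by unfold_locales
  show ?thesis using main assms(3) by simp
qed

end
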